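(* Let $q$ be a prime power and let $M$ be a simple and cosimple matroid representable over $GF(q)$ that has two distinct loose elements $e$ and $f$. Then $r(M)\le 2q$.
   Context: All matroids are finite. An element $t$ of a matroid $M$ is loose if every circuit of $M$ containing $t$ has size at least the rank $r(M)$. A matroid is cosimple if its dual is simple. *)

theory Defs
  imports "HOL-Computational_Algebra.Primes"
begin

definition matroid :: "'a set \<Rightarrow> 'a set set \<Rightarrow> bool" where
  "matroid E \<I> \<longleftrightarrow> finite E \<and> (\<forall>X\<in>\<I>. X \<subseteq> E) \<and> {} \<in> \<I>
     \<and> (\<forall>X Y. Y \<in> \<I> \<and> X \<subseteq> Y \<longrightarrow> X \<in> \<I>)
     \<and> (\<forall>X Y. X \<in> \<I> \<and> Y \<in> \<I> \<and> card X < card Y \<longrightarrow> (\<exists>y\<in>Y - X. insert y X \<in> \<I>))"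

definition mrank :: "'a set \<Rightarrow> 'a set set \<Rightarrow> nat" where
  "mrank E \<I> = Max (card ` {X. X \<subseteq> E \<and> X \<in> \<I>})"

definition circuit :: "'a set \<Rightarrow> 'a set set \<Rightarrow> 'a set \<Rightarrow> bool" where
  "circuit E \<I> C \<longleftrightarrow> C \<subseteq> E \<and> C \<notin> \<I> \<and> (\<forall>D. D \<subset> C \<longrightarrow> D \<in> \<I>)"

definition bases :: "'a set \<Rightarrow> 'a set set \<Rightarrow> 'a set set" where
  "bases E \<I> = {B. B \<in> \<I> \<and> (\<forall>X\<in>\<I>. B \<subseteq> X \<longrightarrow> X = B)}"

definition dual_indep :: "'a set \<Rightarrow> 'a set set \<Rightarrow> 'a set set" where
  "dual_indep E \<I> = {X. \<exists>B\<in>bases E \<I>. X \<subseteq> E - B}"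

text \<open>Simple: no loops and no parallel pairs, i.e. no circuit of size at most 2.\<close>
definition simple_matroid :: "'a set \<Rightarrow> 'a set set \<Rightarrow> bool" where
  "simple_matroid E \<I> \<longleftrightarrow> (\<forall>C. circuit E \<I> C \<longrightarrow> card C \<ge> 3)"

definition cosimple_matroid :: "'a set \<Rightarrow> 'a set set \<Rightarrow> bool" where
  "cosimple_matroid E \<I> \<longleftrightarrow> simple_matroid E (dual_indep E \<I>)"

definition loose :: "'a set \<Rightarrow> 'a set set \<Rightarrow> 'a \<Rightarrow> bool" where
  "loose E \<I> t \<longleftrightarrow> t \<in> E \<and> (\<forall>C. circuit E \<I> C \<and> t \<in> C \<longrightarrow> card C \<ge> mrank E \<I>)"

definition lin_indep_family :: "('a \<Rightarrow> nat \<Rightarrow> 'f::field) \<Rightarrow> 'a set \<Rightarrow> bool" where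
  "lin_indep_family v X \<longleftrightarrow>
     (\<forall>c. (\<forall>i. (\<Sum>e\<in>X. c e * v e i) = 0) \<longrightarrow> (\<forall>e\<in>X. c e = 0))"

definition representable_over :: "'f::field itself \<Rightarrow> 'a set \<Rightarrow> 'a set set \<Rightarrow> bool" where
  "representable_over _ E \<I> \<longleftrightarrow>
     (\<exists>n. \<exists>v :: 'a \<Rightarrow> nat \<Rightarrow> 'f. (\<forall>e\<in>E. \<forall>i\<ge>n. v e i = 0) \<and>
        (\<forall>X. X \<subseteq> E \<longrightarrow> (X \<in> \<I> \<longleftrightarrow> lin_indep_family v X)))"

definition prime_power :: "nat \<Rightarrow> bool" where
  "prime_power q \<longleftrightarrow> (\<exists>p k. prime p \<and> k \<ge> 1 \<and> q = p ^ k)"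

end

theory Submission
  imports Defs
begin

lemma minimal_not_in:
  assumes "finite W" "W \<notin> F"
  shows "\<exists>D\<subseteq>W. D \<notin> F \<and> (\<forall>D'. D' \<subset> D \<longrightarrow> D' \<in> F)"
  using assms
proof (induction "card W" arbitrary: W rule: less_induct)
  case less
  show ?case
  proof (cases "\<forall>D'. D' \<subset> W \<longrightarrow> D' \<in> F")
    case True then show ?thesis using less(3) by blast
  next
    case False
    then obtain D' where D': "D' \<subset> W" "D' \<notin> F" by auto
    then have "card D' < card W" using less(2) psubset_card_mono by blast
    moreover have "finite D'" using D'(1) less(2) finite_subset by blast
    ultimately obtain D where "D \<subseteq> D'" "D \<notin> F" "\<forall>D''. D'' \<subset> D \<longrightarrow> D'' \<in> F"
      using less(1) D'(2) by blast
    then show ?thesis using D'(1) by blast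
  qed
qed

locale rep_mat =
  fixes E :: "'a set" and I :: "'a set set" and v :: "'a \<Rightarrow> nat \<Rightarrow> 'k::field"
  assumes mat: "matroid E I"
    and rep: "\<And>X. X \<subseteq> E \<Longrightarrow> X \<in> I \<longleftrightarrow> lin_indep_family v X"
begin

lemma mat_parts: "finite E" "\<forall>X\<in>I. X \<subseteq> E" "\<forall>X Y. Y \<in> I \<and> X \<subseteq> Y \<longrightarrow> X \<in> I"
  "\<forall>X Y. X \<in> I \<and> Y \<in> I \<and> card X < card Y \<longrightarrow> (\<exists>y\<in>Y - X. insert y X \<in> I)"
  using mat unfolding matroid_def by simp_all

lemma finE: "finite E" by (rule mat_parts(1))
lemma indep_sub: "X \<in> I \<Longrightarrow> X \<subseteq> E" using mat_parts(2) by blast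
lemma indep_down: "Y \<in> I \<Longrightarrow> X \<subseteq> Y \<Longrightarrow> X \<in> I" using mat_parts(3) by blast
lemma aug: "X \<in> I \<Longrightarrow> Y \<in> I \<Longrightarrow> card X < card Y \<Longrightarrow> \<exists>y\<in>Y - X. insert y X \<in> I"
  using mat_parts(4) by blast

lemma dep_obtain:
  assumes "X \<subseteq> E" "X \<notin> I"
  obtains c x where "\<forall>i. (\<Sum>x\<in>X. c x * v x i) = 0" "x \<in> X" "c x \<noteq> 0"
proof -
  have "\<not> lin_indep_family v X" using assms rep by blast
  then show ?thesis using that unfolding lin_indep_family_def by blast
qed

lemma indep_zero:
  assumes "X \<in> I" "\<forall>i. (\<Sum>x\<in>X. c x * v x i) = 0" "x \<in> X"
  shows "c x = 0"
proof -
  have "lin_indep_family v X" using assms(1) rep indep_sub by blast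
  then show ?thesis using assms(2,3) unfolding lin_indep_family_def by blast
qed

lemma circuit_through:
  assumes "S \<subseteq> E" "e \<in> S" "c e \<noteq> 0" "\<forall>i. (\<Sum>x\<in>S. c x * v x i) = 0"
  shows "\<exists>C\<subseteq>S. circuit E I C \<and> e \<in> C"
  using assms
proof (induction "card S" arbitrary: S c rule: less_induct)
  case less
  have finS: "finite S" using less(2) finE finite_subset by blast
  have SnI: "S \<notin> I" using indep_zero[of S c e] less by blast
  show ?case
  proof (cases "\<forall>D. D \<subset> S \<longrightarrow> D \<in> I")
    case True
    then have "circuit E I S" using SnI less(2) unfolding circuit_def by blast
    then show ?thesis using less(3) by blast
  next
    case False
    then obtain D where D: "D \<subset> S" "D \<notin> I" by blast
    have cardD: "card D < card S" using D(1) finS psubset_card_mono by blast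
    have DE: "D \<subseteq> E" using D(1) less(2) by blast
    obtain d y where d: "\<forall>i. (\<Sum>x\<in>D. d x * v x i) = 0" "y \<in> D" "d y \<noteq> 0"
      using dep_obtain[OF DE D(2)] by metis
    show ?thesis
    proof (cases "e \<in> D \<and> d e \<noteq> 0")
      case True
      then obtain C where "C \<subseteq> D" "circuit E I C" "e \<in> C"
        using less(1)[OF cardD DE _ _ d(1)] by blast
      then show ?thesis using D(1) by blast
    next
      case False
      have ye: "y \<noteq> e" using False d by blast
      define t where "t = c y / d y"
      define c' where "c' = (\<lambda>z. c z - t * (if z \<in> D then d z else 0))"
      have c'y: "c' y = 0" using d(2,3) unfolding c'_def t_def by simp
      have c'e: "c' e = c e" using False unfolding c'_def by auto
      have sumS: "(\<Sum>x\<in>S. c' x * v x i) = 0" for i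
      proof -
        have "(\<Sum>x\<in>S. c' x * v x i) = (\<Sum>x\<in>S. c x * v x i - t * ((if x \<in> D then d x else 0) * v x i))"
          unfolding c'_def by (rule sum.cong) (simp_all add: algebra_simps)
        also have "\<dots> = (\<Sum>x\<in>S. c x * v x i) - t * (\<Sum>x\<in>S. (if x \<in> D then d x else 0) * v x i)"
          by (simp only: sum_subtractf sum_distrib_left)
        also have "(\<Sum>x\<in>S. (if x \<in> D then d x else 0) * v x i) = (\<Sum>x\<in>D. d x * v x i)"
        proof -
          have "(\<Sum>x\<in>S. (if x \<in> D then d x else 0) * v x i) = (\<Sum>x\<in>S. if x \<in> D then d x * v x i else 0)"
            by (rule sum.cong) auto
          also have "\<dots> = (\<Sum>x\<in>S \<inter> D. d x * v x i)" using finS by (simp add: sum.inter_restrict)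
          also have "S \<inter> D = D" using D(1) by blast
          finally show ?thesis .
        qed
        finally show ?thesis using d(1) less(5) by simp
      qed
      have sumS': "(\<Sum>x\<in>S - {y}. c' x * v x i) = 0" for i
      proof -
        have "y \<in> S" using D d by blast
        then have "(\<Sum>x\<in>S. c' x * v x i) = c' y * v y i + (\<Sum>x\<in>S - {y}. c' x * v x i)"
          using finS by (simp add: sum.remove)
        then show ?thesis using sumS c'y by simp
      qed
      have yS: "y \<in> S" using D d by blast
      have h1: "card (S - {y}) < card S" by (rule card_Diff1_less[OF finS yS])
      have h2: "S - {y} \<subseteq> E" using less(2) by blast
      have h3: "e \<in> S - {y}" using less(3) ye by blast
      have h4: "c' e \<noteq> 0" using c'e less(4) by simp
      have h5: "\<forall>i. (\<Sum>x\<in>S - {y}. c' x * v x i) = 0" using sumS' by blast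
      obtain C where "C \<subseteq> S - {y}" "circuit E I C" "e \<in> C"
        using less(1)[OF h1 h2 h3 h4 h5] by blast
      then show ?thesis by blast
    qed
  qed
qed

lemma loose_support:
  assumes "loose E I e" "S \<subseteq> E" "e \<in> S" "c e \<noteq> 0" "\<forall>i. (\<Sum>x\<in>S. c x * v x i) = 0"
  shows "mrank E I \<le> card {x\<in>S. c x \<noteq> 0}"
proof -
  let ?S = "{x\<in>S. c x \<noteq> 0}"
  have finS: "finite S" using assms(2) finE finite_subset by blast
  have sum0: "(\<Sum>x\<in>?S. c x * v x i) = 0" for i
  proof -
    have "(\<Sum>x\<in>?S. c x * v x i) = (\<Sum>x\<in>S. c x * v x i)"
      using finS by (intro sum.mono_neutral_left) auto
    then show ?thesis using assms(5) by simp
  qed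
  then obtain C where C: "C \<subseteq> ?S" "circuit E I C" "e \<in> C"
    using circuit_through[of ?S e c] assms(2,3,4) sum0 by blast
  then have "mrank E I \<le> card C" using assms(1) unfolding loose_def by blast
  also have "card C \<le> card ?S" using C(1) finS by (simp add: card_mono)
  finally show ?thesis .
qed

lemma span_max:
  assumes "B' \<in> I" "x \<in> E" "x \<notin> B' \<Longrightarrow> insert x B' \<notin> I"
  shows "\<exists>d. \<forall>i. v x i = (\<Sum>y\<in>B'. d y * v y i)"
proof (cases "x \<in> B'")
  case True
  have finB: "finite B'" using indep_sub[OF assms(1)] finE finite_subset by blast
  have "v x i = (\<Sum>y\<in>B'. (if y = x then 1 else 0) * v y i)" for i
  proof -
    have "(\<Sum>y\<in>B'. (if y = x then 1 else 0) * v y i) = (\<Sum>y\<in>B'. if y = x then v y i else 0)"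
      by (rule sum.cong) auto
    then show ?thesis using True finB by simp
  qed
  then show ?thesis by (intro exI[of _ "\<lambda>y. if y = x then 1 else 0"]) blast
next
  case False
  have finB: "finite B'" using indep_sub[OF assms(1)] finE finite_subset by blast
  have sub: "insert x B' \<subseteq> E" using indep_sub[OF assms(1)] assms(2) by blast
  obtain c z where c: "\<forall>i. (\<Sum>y\<in>insert x B'. c y * v y i) = 0" "z \<in> insert x B'" "c z \<noteq> 0"
    using dep_obtain[OF sub assms(3)[OF False]] by metis
  have eq: "c x * v x i + (\<Sum>y\<in>B'. c y * v y i) = 0" for i
    using c(1) False finB by simp
  have cx: "c x \<noteq> 0"
  proof
    assume "c x = 0"
    then have "\<forall>i. (\<Sum>y\<in>B'. c y * v y i) = 0" using eq by simp
    then have "\<forall>y\<in>B'. c y = 0" using indep_zero[OF assms(1)] by blast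
    then show False using c(2,3) \<open>c x = 0\<close> by blast
  qed
  have "v x i = (\<Sum>y\<in>B'. (- c y / c x) * v y i)" for i
  proof -
    have "(\<Sum>y\<in>B'. (- c y / c x) * v y i) = (\<Sum>y\<in>B'. (- 1 / c x) * (c y * v y i))"
      by (rule sum.cong) auto
    also have "\<dots> = (- 1 / c x) * (\<Sum>y\<in>B'. c y * v y i)" by (simp only: sum_distrib_left)
    also have "\<dots> = - (\<Sum>y\<in>B'. c y * v y i) / c x" by simp
    also have "\<dots> = v x i"
    proof -
      have "- (\<Sum>y\<in>B'. c y * v y i) = c x * v x i" using eq[of i] by (metis add.commute add_eq_0_iff)
      then show ?thesis using cx by simp
    qed
    finally show ?thesis by simp
  qed
  then show ?thesis by (intro exI[of _ "\<lambda>y. - c y / c x"]) blast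
qed

lemma delta_sum:
  fixes z :: "'a \<Rightarrow> 'k"
  assumes "finite B" "e \<in> B"
  shows "(\<Sum>b\<in>B. (if b = e then 1 else 0) * z b) = z e"
proof -
  have "(\<Sum>b\<in>B. (if b = e then 1 else 0) * z b) = (\<Sum>b\<in>B. if b = e then z b else 0)"
    by (rule sum.cong) auto
  then show ?thesis using assms by simp
qed

lemma cocircuit_big:
  assumes cos: "cosimple_matroid E I" and BI: "B \<in> I"
    and coord: "\<forall>x\<in>E. \<forall>i. v x i = (\<Sum>b\<in>B. a x b * v b i)"
    and x0: "x0 \<in> B" "w x0 \<noteq> 0"
  shows "3 \<le> card {x\<in>E. (\<Sum>b\<in>B. w b * a x b) \<noteq> 0}"
proof -
  define \<phi> where "\<phi> = (\<lambda>x. \<Sum>b\<in>B. w b * a x b)"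
  define W where "W = {x\<in>E. \<phi> x \<noteq> 0}"
  have BE: "B \<subseteq> E" using indep_sub[OF BI] .
  have finB: "finite B" using BE finE finite_subset by blast
  have finW: "finite W" unfolding W_def using finE by simp
  have WnD: "W \<notin> dual_indep E I"
  proof
    assume "W \<in> dual_indep E I"
    then obtain B' where B': "B' \<in> bases E I" "W \<subseteq> E - B'" unfolding dual_indep_def by blast
    have B'I: "B' \<in> I" and max: "\<forall>X\<in>I. B' \<subseteq> X \<longrightarrow> X = B'"
      using B'(1) unfolding bases_def by auto
    have B'E: "B' \<subseteq> E" using indep_sub[OF B'I] .
    have finB': "finite B'" using B'E finE finite_subset by blast
    have x0E: "x0 \<in> E" using x0(1) BE by blast
    have "x0 \<notin> B' \<Longrightarrow> insert x0 B' \<notin> I" using max by blast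
    then obtain d where d: "\<forall>i. v x0 i = (\<Sum>y\<in>B'. d y * v y i)"
      using span_max[OF B'I x0E] by blast
    define c where "c = (\<lambda>b. (\<Sum>y\<in>B'. d y * a y b) - (if b = x0 then 1 else 0))"
    have "(\<Sum>b\<in>B. c b * v b i) = 0" for i
    proof -
      have "(\<Sum>b\<in>B. c b * v b i) = (\<Sum>b\<in>B. (\<Sum>y\<in>B'. d y * a y b) * v b i) - (\<Sum>b\<in>B. (if b = x0 then 1 else 0) * v b i)"
        unfolding c_def by (simp only: left_diff_distrib sum_subtractf)
      also have "(\<Sum>b\<in>B. (if b = x0 then 1 else 0) * v b i) = v x0 i"
        using delta_sum[OF finB x0(1)] by simp
      also have "(\<Sum>b\<in>B. (\<Sum>y\<in>B'. d y * a y b) * v b i) = (\<Sum>y\<in>B'. d y * (\<Sum>b\<in>B. a y b * v b i))"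
        by (simp add: sum_distrib_left sum_distrib_right mult.assoc sum.swap[of _ B])
      also have "\<dots> = (\<Sum>y\<in>B'. d y * v y i)"
        using coord B'E by (intro sum.cong) auto
      also have "\<dots> = v x0 i" using d by simp
      finally show ?thesis by simp
    qed
    then have cz: "\<forall>b\<in>B. c b = 0" using indep_zero[OF BI] by blast
    have key: "\<forall>b\<in>B. (\<Sum>y\<in>B'. d y * a y b) = (if b = x0 then 1 else 0)"
      using cz unfolding c_def by simp
    have "w x0 = (\<Sum>b\<in>B. (if b = x0 then 1 else 0) * w b)"
      using delta_sum[OF finB x0(1)] by simp
    also have "\<dots> = (\<Sum>b\<in>B. w b * (\<Sum>y\<in>B'. d y * a y b))"
      using key by (intro sum.cong) auto
    also have "\<dots> = (\<Sum>y\<in>B'. d y * \<phi> y)"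
      unfolding \<phi>_def by (simp add: sum_distrib_left mult.assoc mult.left_commute sum.swap[of _ B])
    also have "\<dots> = 0"
    proof (rule sum.neutral, rule ballI)
      fix y assume "y \<in> B'"
      then have "y \<in> E" "y \<notin> W" using B'E B'(2) by auto
      then show "d y * \<phi> y = 0" unfolding W_def by simp
    qed
    finally show False using x0(2) by simp
  qed
  obtain D where D: "D \<subseteq> W" "D \<notin> dual_indep E I" "\<forall>D'. D' \<subset> D \<longrightarrow> D' \<in> dual_indep E I"
    using minimal_not_in[OF finW WnD] by blast
  have "D \<subseteq> E" using D(1) unfolding W_def by blast
  then have "circuit E (dual_indep E I) D" using D unfolding circuit_def by blast
  then have "3 \<le> card D" using cos unfolding cosimple_matroid_def simple_matroid_def by blast
  also have "card D \<le> card W" using D(1) finW by (simp add: card_mono)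
  finally show ?thesis unfolding W_def \<phi>_def .
qed

lemma zeros_bound:
  assumes BI: "B \<in> I" and cardB: "card B = mrank E I"
    and coord: "\<forall>x\<in>E. \<forall>i. v x i = (\<Sum>b\<in>B. a x b * v b i)"
    and g: "g \<in> E" "g \<notin> B" and x0: "x0 \<in> B" "loose E I x0" "a g x0 \<noteq> 0"
  shows "card {b\<in>B. a g b = 0} \<le> 1"
proof -
  have BE: "B \<subseteq> E" using indep_sub[OF BI] .
  have finB: "finite B" using BE finE finite_subset by blast
  define c where "c = (\<lambda>z. if z = g then -1 else a g z)"
  let ?S = "insert g B"
  have SE: "?S \<subseteq> E" using BE g by blast
  have sum0: "\<forall>i. (\<Sum>z\<in>?S. c z * v z i) = 0"
  proof
    fix i
    have "(\<Sum>z\<in>?S. c z * v z i) = c g * v g i + (\<Sum>z\<in>B. c z * v z i)"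
      using finB g(2) by simp
    also have "(\<Sum>z\<in>B. c z * v z i) = (\<Sum>z\<in>B. a g z * v z i)"
      using g(2) unfolding c_def by (intro sum.cong) auto
    also have "\<dots> = v g i" using coord g(1) by simp
    finally show "(\<Sum>z\<in>?S. c z * v z i) = 0" unfolding c_def by simp
  qed
  have cx0: "c x0 \<noteq> 0" using x0 g(2) unfolding c_def by auto
  have "mrank E I \<le> card {z\<in>?S. c z \<noteq> 0}"
    using loose_support[OF x0(2) SE _ cx0 sum0] x0(1) by blast
  also have "{z\<in>?S. c z \<noteq> 0} = insert g {b\<in>B. a g b \<noteq> 0}"
    using g(2) unfolding c_def by auto
  also have "card \<dots> = Suc (card {b\<in>B. a g b \<noteq> 0})"
    using finB g(2) by simp
  finally have 1: "card B \<le> Suc (card {b\<in>B. a g b \<noteq> 0})" using cardB by simp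
  have "card B = card {b\<in>B. a g b \<noteq> 0} + card {b\<in>B. a g b = 0}"
  proof -
    have "B = {b\<in>B. a g b \<noteq> 0} \<union> {b\<in>B. a g b = 0}" by blast
    moreover have "{b\<in>B. a g b \<noteq> 0} \<inter> {b\<in>B. a g b = 0} = {}" by blast
    ultimately show ?thesis using finB by (metis (no_types, lifting) card_Un_disjoint finite_Un)
  qed
  then show ?thesis using 1 by simp
qed

lemma Z_bound:
  assumes BI: "B \<in> I" and cardB: "card B = mrank E I"
    and coord: "\<forall>x\<in>E. \<forall>i. v x i = (\<Sum>b\<in>B. a x b * v b i)"
    and g: "g \<in> E" "g \<notin> B" and h: "h \<in> E" "h \<notin> B" "g \<noteq> h"
    and l: "l \<noteq> 0"
    and x0: "x0 \<in> B" "loose E I x0" "a g x0 \<noteq> l * a h x0"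
  shows "card {b\<in>B. a g b = l * a h b} \<le> 2"
proof -
  have BE: "B \<subseteq> E" using indep_sub[OF BI] .
  have finB: "finite B" using BE finE finite_subset by blast
  define c where "c = (\<lambda>z. if z = g then 1 else if z = h then - l else - (a g z - l * a h z))"
  let ?S = "insert g (insert h B)"
  have SE: "?S \<subseteq> E" using BE g h by blast
  have sum0: "\<forall>i. (\<Sum>z\<in>?S. c z * v z i) = 0"
  proof
    fix i
    have "(\<Sum>z\<in>?S. c z * v z i) = c g * v g i + (c h * v h i + (\<Sum>z\<in>B. c z * v z i))"
      using finB g(2) h by simp
    also have "(\<Sum>z\<in>B. c z * v z i) = - ((\<Sum>z\<in>B. a g z * v z i) - l * (\<Sum>z\<in>B. a h z * v z i))"
    proof -
      have "(\<Sum>z\<in>B. c z * v z i) = (\<Sum>z\<in>B. - (a g z * v z i - l * (a h z * v z i)))"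
        using g(2) h(2) unfolding c_def by (intro sum.cong) (auto simp: algebra_simps)
      also have "\<dots> = - ((\<Sum>z\<in>B. a g z * v z i) - l * (\<Sum>z\<in>B. a h z * v z i))"
        by (simp only: sum_negf sum_subtractf sum_distrib_left)
      finally show ?thesis .
    qed
    also have "(\<Sum>z\<in>B. a g z * v z i) = v g i" using coord g(1) by simp
    also have "(\<Sum>z\<in>B. a h z * v z i) = v h i" using coord h(1) by simp
    finally show "(\<Sum>z\<in>?S. c z * v z i) = 0" unfolding c_def using h(3) by simp
  qed
  have cx0: "c x0 \<noteq> 0" using x0 g(2) h(2) unfolding c_def by auto
  have "mrank E I \<le> card {z\<in>?S. c z \<noteq> 0}"
    using loose_support[OF x0(2) SE _ cx0 sum0] x0(1) by blast
  also have "{z\<in>?S. c z \<noteq> 0} = insert g (insert h {b\<in>B. a g b \<noteq> l * a h b})"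
    using g(2) h l unfolding c_def by auto
  also have "card \<dots> = Suc (Suc (card {b\<in>B. a g b \<noteq> l * a h b}))"
    using finB g(2) h by simp
  finally have 1: "card B \<le> Suc (Suc (card {b\<in>B. a g b \<noteq> l * a h b}))" using cardB by simp
  have "card B = card {b\<in>B. a g b \<noteq> l * a h b} + card {b\<in>B. a g b = l * a h b}"
  proof -
    have "B = {b\<in>B. a g b \<noteq> l * a h b} \<union> {b\<in>B. a g b = l * a h b}" by blast
    moreover have "{b\<in>B. a g b \<noteq> l * a h b} \<inter> {b\<in>B. a g b = l * a h b} = {}" by blast
    ultimately show ?thesis using finB by (metis (no_types, lifting) card_Un_disjoint finite_Un)
  qed
  then show ?thesis using 1 by simp
qed

lemma main:
  assumes finK: "finite (UNIV :: 'k set)" and cardK: "card (UNIV :: 'k set) = q"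
    and sim: "simple_matroid E I" and cos: "cosimple_matroid E I"
    and le: "loose E I e" and lf: "loose E I f" and ef: "e \<noteq> f"
  shows "mrank E I \<le> 2 * q"
proof -
  have eE: "e \<in> E" and fE: "f \<in> E" using le lf unfolding loose_def by auto
  have efI: "{e, f} \<in> I"
  proof (rule ccontr)
    assume nI: "{e, f} \<notin> I"
    obtain D where D: "D \<subseteq> {e, f}" "D \<notin> I" "\<forall>D'. D' \<subset> D \<longrightarrow> D' \<in> I"
      using minimal_not_in[OF _ nI] by blast
    have "circuit E I D" using D eE fE unfolding circuit_def by blast
    then have "3 \<le> card D" using sim unfolding simple_matroid_def by blast
    moreover have "card D \<le> card {e, f}" using D(1) by (simp add: card_mono)
    moreover have "card {e, f} \<le> 2" by (simp add: card_insert_le_m1)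
    ultimately show False by simp
  qed
  define Q where "Q = {X. X \<in> I \<and> {e, f} \<subseteq> X}"
  have finQ: "finite Q"
  proof -
    have "Q \<subseteq> Pow E" unfolding Q_def using indep_sub by blast
    then show ?thesis using finE finite_subset by blast
  qed
  have Qne: "{e, f} \<in> Q" unfolding Q_def using efI by blast
  have "Max (card ` Q) \<in> card ` Q" using finQ Qne by (intro Max_in) auto
  then obtain B where BQ: "B \<in> Q" and Bmax: "card B = Max (card ` Q)" by (metis imageE)
  have Bge: "\<forall>X\<in>Q. card X \<le> card B" using Bmax finQ by simp
  have BI: "B \<in> I" and efB: "e \<in> B" "f \<in> B" using BQ unfolding Q_def by auto
  have BE: "B \<subseteq> E" using indep_sub[OF BI] .
  have finB: "finite B" using BE finE finite_subset by blast
  have maxB: "insert x B \<notin> I" if "x \<notin> B" for x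
  proof
    assume "insert x B \<in> I"
    then have "insert x B \<in> Q" using BQ unfolding Q_def by auto
    then have "card (insert x B) \<le> card B" using Bge by blast
    then show False using that finB by simp
  qed
  have cardB: "card B = mrank E I"
  proof -
    define R where "R = {X. X \<subseteq> E \<and> X \<in> I}"
    have finR: "finite R" unfolding R_def using finE by simp
    have BR: "B \<in> R" unfolding R_def using BE BI by blast
    have m: "mrank E I = Max (card ` R)" unfolding mrank_def R_def by simp
    have "card B \<le> Max (card ` R)" using finR BR by simp
    moreover have "Max (card ` R) \<le> card B"
    proof -
      have "Max (card ` R) \<in> card ` R" using finR BR by (intro Max_in) auto
      then obtain X where XR: "X \<in> R" and X: "card X = Max (card ` R)" by (metis imageE)
      have XI: "X \<in> I" using XR unfolding R_def by blast
      show ?thesis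
      proof (rule ccontr)
        assume "\<not> Max (card ` R) \<le> card B"
        then have "card B < card X" using X by simp
        then obtain y where "y \<in> X - B" "insert y B \<in> I" using aug[OF BI XI] by blast
        then show False using maxB by blast
      qed
    qed
    ultimately show ?thesis using m by simp
  qed
  define a where "a = (\<lambda>x. if x \<in> B then (\<lambda>b. if b = x then 1 else 0)
      else (SOME a'. \<forall>i. v x i = (\<Sum>b\<in>B. a' b * v b i)))"
  have coord: "\<forall>x\<in>E. \<forall>i. v x i = (\<Sum>b\<in>B. a x b * v b i)"
  proof (intro ballI allI)
    fix x i assume xE: "x \<in> E"
    show "v x i = (\<Sum>b\<in>B. a x b * v b i)"
    proof (cases "x \<in> B")
      case True
      have "(\<Sum>b\<in>B. a x b * v b i) = (\<Sum>b\<in>B. (if b = x then 1 else 0) * v b i)"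
        unfolding a_def using True by simp
      also have "\<dots> = v x i" using delta_sum[OF finB True] .
      finally show ?thesis by simp
    next
      case False
      have ex: "\<exists>a'. \<forall>i. v x i = (\<Sum>b\<in>B. a' b * v b i)"
        using span_max[OF BI xE] maxB by blast
      have ax: "a x = (SOME a'. \<forall>i. v x i = (\<Sum>b\<in>B. a' b * v b i))"
        unfolding a_def using False by (simp only: if_False)
      have "\<forall>i. v x i = (\<Sum>b\<in>B. a x b * v b i)"
        unfolding ax by (rule someI_ex[OF ex])
      then show ?thesis by blast
    qed
  qed
  have aB: "a x b = (if b = x then 1 else 0)" if "x \<in> B" for x b
    unfolding a_def using that by simp
  obtain g where g: "g \<in> E" "g \<notin> B" "a g e \<noteq> 0"
  proof -
    define w :: "'a \<Rightarrow> 'k" where "w = (\<lambda>b. if b = e then 1 else 0)"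
    have 3: "3 \<le> card {x\<in>E. (\<Sum>b\<in>B. w b * a x b) \<noteq> 0}"
      using cocircuit_big[of B a e w, OF cos BI coord efB(1)] unfolding w_def by simp
    have eq: "(\<Sum>b\<in>B. w b * a x b) = a x e" for x
      unfolding w_def using delta_sum[OF finB efB(1)] by simp
    have "\<exists>g. g \<in> E \<and> g \<notin> B \<and> a g e \<noteq> 0"
    proof (rule ccontr)
      assume nex: "\<not> ?thesis"
      have "{x\<in>E. (\<Sum>b\<in>B. w b * a x b) \<noteq> 0} \<subseteq> {e}"
      proof
        fix x assume "x \<in> {x\<in>E. (\<Sum>b\<in>B. w b * a x b) \<noteq> 0}"
        then have x: "x \<in> E" "a x e \<noteq> 0" unfolding eq by auto
        then have "x \<in> B" using nex by blast
        then have "a x e = (if e = x then 1 else 0)" by (rule aB)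
        then show "x \<in> {e}" using x(2) by (auto split: if_splits)
      qed
      then have "card {x\<in>E. (\<Sum>b\<in>B. w b * a x b) \<noteq> 0} \<le> 1"
        using card_mono[of "{e}"] by fastforce
      then show False using 3 by simp
    qed
    then show ?thesis using that by blast
  qed
  define \<psi> where "\<psi> = (\<lambda>x. a g f * a x e - a g e * a x f)"
  obtain h where h: "h \<in> E" "h \<notin> B" "\<psi> h \<noteq> 0"
  proof -
    define w :: "'a \<Rightarrow> 'k" where "w = (\<lambda>b. a g f * (if b = e then 1 else 0) - a g e * (if b = f then 1 else 0))"
    have wf: "w f \<noteq> 0" unfolding w_def using ef g(3) by simp
    have 3: "3 \<le> card {x\<in>E. (\<Sum>b\<in>B. w b * a x b) \<noteq> 0}"
      using cocircuit_big[of B a f w, OF cos BI coord efB(2) wf] .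
    have eq: "(\<Sum>b\<in>B. w b * a x b) = \<psi> x" for x
    proof -
      have "(\<Sum>b\<in>B. w b * a x b) = a g f * (\<Sum>b\<in>B. (if b = e then 1 else 0) * a x b)
          - a g e * (\<Sum>b\<in>B. (if b = f then 1 else 0) * a x b)"
        unfolding w_def by (simp add: left_diff_distrib sum_subtractf sum_distrib_left mult.assoc)
      also have "\<dots> = \<psi> x" unfolding \<psi>_def using delta_sum[OF finB efB(1)] delta_sum[OF finB efB(2)]
        by simp
      finally show ?thesis .
    qed
    have "\<exists>h. h \<in> E \<and> h \<notin> B \<and> \<psi> h \<noteq> 0"
    proof (rule ccontr)
      assume nex: "\<not> ?thesis"
      have "{x\<in>E. (\<Sum>b\<in>B. w b * a x b) \<noteq> 0} \<subseteq> {e, f}"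
      proof
        fix x assume "x \<in> {x\<in>E. (\<Sum>b\<in>B. w b * a x b) \<noteq> 0}"
        then have x: "x \<in> E" "\<psi> x \<noteq> 0" unfolding eq by auto
        then have "x \<in> B" using nex by blast
        then have "a x e = (if e = x then 1 else 0)" "a x f = (if f = x then 1 else 0)"
          by (rule aB)+
        then show "x \<in> {e, f}" using x(2) unfolding \<psi>_def by (auto split: if_splits)
      qed
      then have "card {x\<in>E. (\<Sum>b\<in>B. w b * a x b) \<noteq> 0} \<le> card {e, f}"
        by (simp add: card_mono)
      also have "card {e, f} \<le> 2" by (simp add: card_insert_le_m1)
      finally show False using 3 by simp
    qed
    then show ?thesis using that by blast
  qed
  have gh: "g \<noteq> h"
  proof
    assume "g = h"
    then have "\<psi> h = 0" unfolding \<psi>_def by (simp add: mult.commute)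
    then show False using h(3) by simp
  qed
  have A0: "card {b\<in>B. a g b = 0} \<le> 1"
    using zeros_bound[OF BI cardB coord g(1,2) efB(1) le g(3)] .
  have H0: "card {b\<in>B. a h b = 0} \<le> 1"
  proof (cases "a h e = 0")
    case True
    then have "a h f \<noteq> 0" using h(3) unfolding \<psi>_def by auto
    then show ?thesis using zeros_bound[OF BI cardB coord h(1,2) efB(2) lf] by blast
  next
    case False
    then show ?thesis using zeros_bound[OF BI cardB coord h(1,2) efB(1) le] by blast
  qed
  define Z where "Z = (\<lambda>l. {b\<in>B. a g b = l * a h b})"
  have Zb: "card (Z l) \<le> 2" if l: "l \<noteq> 0" for l
  proof (cases "a g e = l * a h e")
    case True
    have "a g f \<noteq> l * a h f"
    proof
      assume "a g f = l * a h f"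
      then have "\<psi> h = 0" unfolding \<psi>_def using True by (simp add: algebra_simps)
      then show False using h(3) by simp
    qed
    then show ?thesis unfolding Z_def using Z_bound[OF BI cardB coord g(1,2) h(1,2) gh l efB(2) lf] by blast
  next
    case False
    then show ?thesis unfolding Z_def using Z_bound[OF BI cardB coord g(1,2) h(1,2) gh l efB(1) le] by blast
  qed
  define L where "L = (UNIV :: 'k set) - {0}"
  have finL: "finite L" unfolding L_def using finK by simp
  have cardL: "card L = q - 1" unfolding L_def using finK cardK by (simp add: card_Diff_singleton)
  have cover: "B \<subseteq> (\<Union>l\<in>L. Z l) \<union> {b\<in>B. a g b = 0} \<union> {b\<in>B. a h b = 0}"
  proof
    fix b assume b: "b \<in> B"
    show "b \<in> (\<Union>l\<in>L. Z l) \<union> {b\<in>B. a g b = 0} \<union> {b\<in>B. a h b = 0}"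
    proof (cases "a g b = 0 \<or> a h b = 0")
      case True then show ?thesis using b by blast
    next
      case False
      then have "a g b / a h b \<in> L" "b \<in> Z (a g b / a h b)"
        unfolding L_def Z_def using b by auto
      then show ?thesis by blast
    qed
  qed
  have finU: "finite ((\<Union>l\<in>L. Z l) \<union> {b\<in>B. a g b = 0} \<union> {b\<in>B. a h b = 0})"
    unfolding Z_def by (rule finite_subset[OF _ finB]) auto
  let ?U = "\<Union>l\<in>L. Z l"
  let ?A = "{b\<in>B. a g b = 0}"
  let ?H = "{b\<in>B. a h b = 0}"
  have c1: "card B \<le> card (?U \<union> ?A \<union> ?H)"
    using card_mono[OF finU cover] .
  have c2: "card (?U \<union> ?A \<union> ?H) \<le> card (?U \<union> ?A) + card ?H"
    by (rule card_Un_le)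
  have c3: "card (?U \<union> ?A) \<le> card ?U + card ?A"
    by (rule card_Un_le)
  have c4: "card ?U \<le> (\<Sum>l\<in>L. card (Z l))"
    using card_UN_le[OF finL] by blast
  have c5: "(\<Sum>l\<in>L. card (Z l)) \<le> (\<Sum>l\<in>L. 2)"
    using Zb unfolding L_def by (intro sum_mono) auto
  have c6: "(\<Sum>l\<in>L. (2::nat)) = 2 * (q - 1)" using cardL by simp
  have "card B \<le> 2 * (q - 1) + 1 + 1" using c1 c2 c3 c4 c5 c6 A0 H0 by linarith
  moreover have "q \<ge> 1" using cardK finK by (metis UNIV_not_empty card_0_eq less_one not_le)
  ultimately show ?thesis using cardB by simp
qed

end

theorem corollary4p4:
  fixes E :: "'a set" and \<I> :: "'a set set" and q :: nat and e f :: 'a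
  assumes "prime_power q"
    and "card (UNIV :: 'k set) = q"
    and "matroid E \<I>"
    and "simple_matroid E \<I>" and "cosimple_matroid E \<I>"
    and "representable_over TYPE('k::{field,finite}) E \<I>"
    and "loose E \<I> e" and "loose E \<I> f" and "e \<noteq> f"
  shows "mrank E \<I> \<le> 2 * q"
proof -
  obtain n and v :: "'a \<Rightarrow> nat \<Rightarrow> 'k" where
    v: "\<forall>X. X \<subseteq> E \<longrightarrow> (X \<in> \<I> \<longleftrightarrow> lin_indep_family v X)"
    using assms(6) unfolding representable_over_def by blast
  interpret rep_mat E \<I> v
    using assms(3) v by unfold_locales blast+
  show ?thesis
    using main[OF finite_UNIV assms(2) assms(4) assms(5) assms(7) assms(8) assms(9)] .
qed

end
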